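(* Let $m,n\in\mathbb{N}$, $T=\{1,\dots,m\}$, $\mathcal{F}(A,b)=\{x\in\mathbb{R}^n\mid Ax\le b\}$ for $(A,b)\in\mathbb{R}^{m\times n}\times\mathbb{R}^m$, and let $(\bar A,\bar b)$ be such that $\mathcal{F}(\bar A,\bar b)$ is nonempty and bounded. Then $$\operatorname{Lipusc}\mathcal{F}(\bar A,\bar b)=\max_{x\in\mathcal{E}(\bar A,\bar b)}\operatorname{clm}\mathcal{F}\big((\bar A,\bar b),x\big).$$
   Context: $\mathcal{E}(\bar A,\bar b):=\operatorname{extr}\big(\mathcal{F}(\bar A,\bar b)\cap\operatorname{span}\{\bar a_t,\ t\in T\}\big)$, where $\bar a_t'$ is the $t$-th row of $\bar A$ and $\operatorname{extr}$ denotes the set of extreme points. $\mathbb{R}^n$ carries an arbitrary norm $\|\cdot\|$ with dual norm $\|u\|_*=\max_{\|x\|\le1}|u'x|$; the parameter space carries the norm $\|(A,b)\|=\max_{t\in T}\max\{\|a_t\|_*,|b_t|\}$. $\operatorname{dist}(x,\Omega)=\inf_{\omega\in\Omega}\|x-\omega\|$ with $\inf\emptyset=+\infty$. $\operatorname{Lipusc}\mathcal{F}(\bar A,\bar b)$ is the infimum of all $\kappa\ge0$ for which there is a neighborhood $V$ of $(\bar A,\bar b)$ with $\operatorname{dist}(x,\mathcal{F}(\bar A,\bar b))\le\kappa\|(A,b)-(\bar A,\bar b)\|$ for all $(A,b)\in V$, $x\in\mathcal{F}(A,b)$. For $\bar x\in\mathcal{F}(\bar A,\bar b)$, $\operatorname{clm}\mathcal{F}((\bar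 A,\bar b),\bar x)$ is the infimum of all $\kappa\ge0$ for which there are neighborhoods $V$ of $(\bar A,\bar b)$ and $U$ of $\bar x$ with $\operatorname{dist}(x,\mathcal{F}(\bar A,\bar b))\le\kappa\|(A,b)-(\bar A,\bar b)\|$ for all $(A,b)\in V$, $x\in\mathcal{F}(A,b)\cap U$. *)

theory Defs
  imports "HOL-Analysis.Analysis"
begin

text \<open>Vectors of R^n are real^'n; the index set T = {1..m} is the finite type 'm.
  A matrix A in R^(m x n) is given by its rows: A $ t :: real^'n is the t-th row a_t.\<close>

definition is_norm :: "(real^'n \<Rightarrow> real) \<Rightarrow> bool" where
  "is_norm N \<longleftrightarrow> (\<forall>x. 0 \<le> N x) \<and> (\<forall>x. N x = 0 \<longleftrightarrow> x = 0)
     \<and> (\<forall>c x. N (c *\<^sub>R x) = \<bar>c\<bar> * N x) \<and> (\<forall>x y. N (x + y) \<le> N x + N y)"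

definition dual_norm :: "(real^'n \<Rightarrow> real) \<Rightarrow> real^'n \<Rightarrow> real" where
  "dual_norm N u = Sup {\<bar>u \<bullet> x\<bar> | x. N x \<le> 1}"

definition param_norm :: "(real^'n \<Rightarrow> real) \<Rightarrow> real^'n^'m::finite \<Rightarrow> real^'m \<Rightarrow> real" where
  "param_norm N A b = Max (range (\<lambda>t. max (dual_norm N (A $ t)) \<bar>b $ t\<bar>))"

definition feas :: "real^'n^'m \<Rightarrow> real^'m \<Rightarrow> (real^'n) set" where
  "feas A b = {x. \<forall>t. A $ t \<bullet> x \<le> b $ t}"

definition extr_set :: "real^'n^'m \<Rightarrow> real^'m \<Rightarrow> (real^'n) set" where
  "extr_set A b = {x. x extreme_point_of (feas A b \<inter> span (range (\<lambda>t. A $ t)))}"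

text \<open>dist(x, Omega) = inf of N(x - w), with inf of the empty set = +infinity.\<close>
definition distN :: "(real^'n \<Rightarrow> real) \<Rightarrow> real^'n \<Rightarrow> (real^'n) set \<Rightarrow> ereal" where
  "distN N x \<Omega> = Inf ((\<lambda>w. ereal (N (x - w))) ` \<Omega>)"

text \<open>Lipschitz upper semicontinuity modulus (infimum of an empty set is +infinity).
  Neighborhoods of (A,b) are expressed by balls in the parameter norm.\<close>
definition Lipusc :: "(real^'n \<Rightarrow> real) \<Rightarrow> real^'n^'m::finite \<Rightarrow> real^'m \<Rightarrow> ereal" where
  "Lipusc N A b = Inf {ereal \<kappa> | \<kappa>. 0 \<le> \<kappa> \<and> (\<exists>\<delta>>0. \<forall>A' b'.
      param_norm N (A' - A) (b' - b) < \<delta> \<longrightarrow>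
      (\<forall>x\<in>feas A' b'. distN N x (feas A b) \<le> ereal (\<kappa> * param_norm N (A' - A) (b' - b))))}"

definition clm :: "(real^'n \<Rightarrow> real) \<Rightarrow> real^'n^'m::finite \<Rightarrow> real^'m \<Rightarrow> real^'n \<Rightarrow> ereal" where
  "clm N A b xbar = Inf {ereal \<kappa> | \<kappa>. 0 \<le> \<kappa> \<and> (\<exists>\<delta>>0. \<exists>\<epsilon>>0. \<forall>A' b'.
      param_norm N (A' - A) (b' - b) < \<delta> \<longrightarrow>
      (\<forall>x\<in>feas A' b'. N (x - xbar) < \<epsilon> \<longrightarrow>
          distN N x (feas A b) \<le> ereal (\<kappa> * param_norm N (A' - A) (b' - b))))}"

end

theory Submission
  imports Defs
begin

locale nrm =
  fixes N :: "real^'n \<Rightarrow> real"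
  assumes isn: "is_norm N"
begin

lemma nonneg: "0 \<le> N x" using isn by (auto simp: is_norm_def)
lemma zero_iff: "N x = 0 \<longleftrightarrow> x = 0" using isn by (auto simp: is_norm_def)
lemma scale: "N (c *\<^sub>R x) = \<bar>c\<bar> * N x" using isn by (auto simp: is_norm_def)
lemma triangle: "N (x + y) \<le> N x + N y" using isn by (auto simp: is_norm_def)
lemma N0[simp]: "N 0 = 0" using zero_iff by auto
lemma Nminus: "N (- x) = N x" using scale[of "-1" x] by simp
lemma Ncommute: "N (x - y) = N (y - x)" using Nminus[of "x - y"] by simp
lemma Ntri_diff: "N (x - z) \<le> N (x - y) + N (y - z)"
  using triangle[of "x - y" "y - z"] by simp
lemma Nrev: "\<bar>N x - N y\<bar> \<le> N (x - y)"
  using triangle[of "x - y" y] triangle[of "y - x" x] Ncommute[of x y] by auto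

lemma Nsum: "N (sum f S) \<le> (\<Sum>i\<in>S. N (f i))"
proof (induction S rule: infinite_finite_induct)
  case (insert x F)
  then show ?case using triangle[of "f x" "sum f F"] by auto
qed auto

lemma upper: obtains C where "C > 0" "\<And>x. N x \<le> C * norm x"
proof -
  define C where "C = (\<Sum>i\<in>Basis. N i) + 1"
  have "0 \<le> (\<Sum>i\<in>Basis. N i)" by (rule sum_nonneg) (simp add: nonneg)
  then have C0: "C > 0" unfolding C_def by simp
  have "N x \<le> C * norm x" for x
  proof -
    have "N x = N (\<Sum>i\<in>Basis. (x \<bullet> i) *\<^sub>R i)" by (simp add: euclidean_representation)
    also have "\<dots> \<le> (\<Sum>i\<in>Basis. N ((x \<bullet> i) *\<^sub>R i))" by (rule Nsum)
    also have "\<dots> = (\<Sum>i\<in>Basis. \<bar>x \<bullet> i\<bar> * N i)" by (simp add: scale)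
    also have "\<dots> \<le> (\<Sum>i\<in>Basis. norm x * N i)"
      by (intro sum_mono mult_right_mono) (auto simp: Basis_le_norm nonneg)
    also have "\<dots> \<le> C * norm x" unfolding C_def by (simp add: sum_distrib_left algebra_simps)
    finally show ?thesis .
  qed
  then show ?thesis using that C0 by blast
qed

lemma cont: "continuous_on S N"
proof -
  obtain C where C: "C > 0" "\<And>x. N x \<le> C * norm x" using upper by blast
  show ?thesis unfolding continuous_on_iff
  proof (intro ballI allI impI)
    fix x e assume "x \<in> S" "(0::real) < e"
    show "\<exists>d>0. \<forall>x'\<in>S. dist x' x < d \<longrightarrow> dist (N x') (N x) < e"
    proof (intro exI[of _ "e / C"] conjI ballI impI)
      show "e / C > 0" using C \<open>e > 0\<close> by simp
      fix y assume "y \<in> S" "dist y x < e / C"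
      have "dist (N y) (N x) \<le> N (y - x)" using Nrev by (simp add: dist_real_def)
      also have "\<dots> \<le> C * norm (y - x)" using C by simp
      also have "\<dots> < C * (e / C)" using \<open>dist y x < e / C\<close> C
        by (intro mult_strict_left_mono) (auto simp: dist_norm)
      finally show "dist (N y) (N x) < e" using C by simp
    qed
  qed
qed

lemma lower: obtains c where "c > 0" "\<And>x. c * norm x \<le> N x"
proof -
  have cs: "compact (sphere (0::real^'n) 1)" by simp
  obtain i :: "real^'n" where i: "i \<in> Basis" using nonempty_Basis by blast
  have "i \<in> sphere 0 1" using i by simp
  then have ne: "sphere (0::real^'n) 1 \<noteq> {}" by blast
  obtain x0 where x0: "x0 \<in> sphere 0 1" "\<And>y. y \<in> sphere 0 1 \<Longrightarrow> N x0 \<le> N y"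
    using continuous_attains_inf[OF cs ne cont] by blast
  have "x0 \<noteq> 0" using x0(1) by auto
  then have "N x0 \<noteq> 0" using zero_iff by simp
  then have pos: "N x0 > 0" using nonneg[of x0] by linarith
  have "N x0 * norm x \<le> N x" for x
  proof (cases "x = 0")
    case False
    then have nx: "norm x > 0" by simp
    have "N x0 \<le> N ((1 / norm x) *\<^sub>R x)" by (rule x0(2)) (simp add: False)
    also have "\<dots> = N x / norm x" by (simp add: scale)
    finally show ?thesis using nx by (simp add: pos_le_divide_eq)
  qed simp
  then show ?thesis using that pos by (metis mult.commute)
qed

lemma bdd: "bdd_above {\<bar>u \<bullet> x\<bar> | x. N x \<le> 1}"
proof -
  obtain c where c: "c > 0" "\<And>x. c * norm x \<le> N x" using lower by blast
  have "\<bar>u \<bullet> x\<bar> \<le> norm u / c" if "N x \<le> 1" for x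
  proof -
    have "\<bar>u \<bullet> x\<bar> \<le> norm u * norm x" by (rule Cauchy_Schwarz_ineq2)
    also have "norm x \<le> 1 / c" using c(2)[of x] that c(1) by (simp add: field_simps)
    then have "norm u * norm x \<le> norm u * (1 / c)" by (rule mult_left_mono) simp
    finally show ?thesis by simp
  qed
  then show ?thesis by (intro bdd_aboveI[of _ "norm u / c"]) auto
qed

lemma dual_ge: "N x \<le> 1 \<Longrightarrow> \<bar>u \<bullet> x\<bar> \<le> dual_norm N u"
  unfolding dual_norm_def by (rule cSup_upper[OF _ bdd]) auto

lemma dual_nonneg: "0 \<le> dual_norm N u"
  using dual_ge[of 0 u] by simp

lemma dual_ineq: "\<bar>u \<bullet> x\<bar> \<le> dual_norm N u * N x"
proof (cases "x = 0")
  case False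
  then have p: "N x > 0" using zero_iff nonneg[of x] by (auto simp: less_le)
  have "\<bar>u \<bullet> ((1 / N x) *\<^sub>R x)\<bar> \<le> dual_norm N u"
    by (rule dual_ge) (use p in \<open>simp add: scale\<close>)
  then show ?thesis using p by (simp add: field_simps abs_mult)
qed simp

lemma dual_le: "(\<And>x. N x \<le> 1 \<Longrightarrow> \<bar>u \<bullet> x\<bar> \<le> \<theta>) \<Longrightarrow> dual_norm N u \<le> \<theta>"
  unfolding dual_norm_def by (rule cSup_least) (auto intro: exI[of _ 0])

lemma dual_lower: obtains c where "c > 0" "\<And>u. c * norm u \<le> dual_norm N u"
proof -
  obtain C where C: "C > 0" "\<And>x. N x \<le> C * norm x" using upper by blast
  have "(1 / C) * norm u \<le> dual_norm N u" for u
  proof (cases "u = 0")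
    case False
    have "N ((1 / (C * norm u)) *\<^sub>R u) \<le> C * norm ((1 / (C * norm u)) *\<^sub>R u)" by (rule C)
    also have "\<dots> = 1" using False C by simp
    finally have "\<bar>u \<bullet> ((1 / (C * norm u)) *\<^sub>R u)\<bar> \<le> dual_norm N u" by (rule dual_ge)
    then show ?thesis using False C by (simp add: power2_norm_eq_inner[symmetric] power2_eq_square)
  qed (simp add: dual_nonneg)
  then show ?thesis using that C by (meson divide_pos_pos zero_less_one)
qed

end

lemma residual_aux:
  fixes A A' :: "real^'n^'m" and b b' :: "real^'m" and P q :: real
  assumes "A' $ t \<bullet> x \<le> b' $ t" "(A' - A) $ t \<bullet> x \<ge> - q" "(b' - b) $ t \<le> P"
  shows "A $ t \<bullet> x - b $ t \<le> P + q"
proof -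
  have e1: "(A' - A) $ t \<bullet> x = A' $ t \<bullet> x - A $ t \<bullet> x"
    by (simp only: vector_minus_component inner_diff_left)
  have e2: "(b' - b) $ t = b' $ t - b $ t" by (rule vector_minus_component)
  show ?thesis using assms unfolding e1 e2 by linarith
qed


context nrm begin

lemma support:
  assumes "\<eta> > 0"
  obtains u where "dual_norm N u \<le> 1" "N x \<le> (1 + \<eta>) * (u \<bullet> x)"
proof (cases "x = 0")
  case True
  then show ?thesis using that[of 0] dual_le[of 0 1] by simp
next
  case False
  then have Nx: "N x > 0" using zero_iff nonneg[of x] by (auto simp: less_le)
  define B where "B = {z. N z \<le> 1}"
  define p where "p = ((1 + \<eta>) / N x) *\<^sub>R x"
  have cB: "convex B" unfolding B_def
  proof (rule convexI)
    fix y z :: "real^'n" and s t :: real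
    assume "y \<in> {z. N z \<le> 1}" "z \<in> {z. N z \<le> 1}" "0 \<le> s" "0 \<le> t" "s + t = 1"
    then have "N (s *\<^sub>R y + t *\<^sub>R z) \<le> s * N y + t * N z"
      using triangle[of "s *\<^sub>R y" "t *\<^sub>R z"] by (simp add: scale)
    also have "\<dots> \<le> s * 1 + t * 1"
      using \<open>y \<in> _\<close> \<open>z \<in> _\<close> \<open>0 \<le> s\<close> \<open>0 \<le> t\<close> by (intro add_mono mult_left_mono) auto
    finally show "s *\<^sub>R y + t *\<^sub>R z \<in> {z. N z \<le> 1}" using \<open>s + t = 1\<close> by simp
  qed
  have clB: "closed B" unfolding B_def
    by (rule closed_Collect_le) (auto intro: cont continuous_on_const)
  have Np: "N p = 1 + \<eta>" using Nx assms by (simp add: p_def scale)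
  then have "p \<notin> B" using assms by (simp add: B_def)
  then obtain a \<beta> where ab: "a \<bullet> p < \<beta>" "\<And>z. z \<in> B \<Longrightarrow> \<beta> < a \<bullet> z"
    using separating_hyperplane_closed_point[OF cB clB] by blast
  have "0 \<in> B" by (simp add: B_def)
  then have b0: "\<beta> < 0" using ab(2)[of 0] by simp
  define u where "u = (1 / \<beta>) *\<^sub>R a"
  have "\<bar>u \<bullet> z\<bar> \<le> 1" if "N z \<le> 1" for z
  proof -
    have "z \<in> B" "- z \<in> B" using that by (auto simp: B_def Nminus)
    then have "\<beta> < a \<bullet> z" "\<beta> < - (a \<bullet> z)" using ab(2) by force+
    then show ?thesis using b0 by (simp add: u_def abs_le_iff divide_le_eq_1 field_simps)
  qed
  then have d: "dual_norm N u \<le> 1" by (rule dual_le)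
  have "u \<bullet> p > 1" using ab(1) b0 by (simp add: u_def field_simps)
  then have "(1 + \<eta>) / N x * (u \<bullet> x) > 1" by (simp add: p_def)
  then have "N x < (1 + \<eta>) * (u \<bullet> x)" using Nx by (simp add: field_simps)
  then show ?thesis using that[OF d] by simp
qed

lemma pn_fin: "finite (range (\<lambda>t. max (dual_norm N (A' $ t)) \<bar>b' $ t\<bar>))" by simp

lemma pn_max: "max (dual_norm N (A' $ t)) \<bar>b' $ t\<bar> \<le> param_norm N A' b'"
  unfolding param_norm_def by (rule Max_ge[OF pn_fin]) auto

lemma pn_dual: "dual_norm N (A' $ t) \<le> param_norm N A' b'"
  using pn_max[of A' t b'] by simp

lemma pn_b: "\<bar>b' $ t\<bar> \<le> param_norm N A' b'"
  using pn_max[of A' t b'] by simp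

lemma pn_nonneg: "0 \<le> param_norm N A' b'"
  using pn_b[of b' undefined A'] by linarith

lemma pn_le: "(\<And>t. dual_norm N (A' $ t) \<le> \<theta> \<and> \<bar>b' $ t\<bar> \<le> \<theta>) \<Longrightarrow> param_norm N A' b' \<le> \<theta>"
  unfolding param_norm_def by (subst Max_le_iff) auto

lemma distN_le: "z \<in> S \<Longrightarrow> distN N x S \<le> ereal (N (x - z))"
  unfolding distN_def by (rule INF_lower) auto

lemma distN_self: "x \<in> S \<Longrightarrow> distN N x S \<le> 0"
  using distN_le[of x S x] by (simp add: zero_ereal_def)

lemma distN_lessE: "distN N x S < ereal r \<Longrightarrow> \<exists>z\<in>S. N (x - z) < r"
  unfolding distN_def by (simp add: INF_less_iff)

lemma residual:
  assumes "x \<in> feas A' b'"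
  shows "A $ t \<bullet> x - b $ t \<le> param_norm N (A' - A) (b' - b) * (1 + N x)"
proof -
  define P where "P = param_norm N (A' - A) (b' - b)"
  have 1: "A' $ t \<bullet> x \<le> b' $ t" using assms unfolding feas_def by blast
  have 2: "(A' - A) $ t \<bullet> x \<ge> - (P * N x)"
  proof -
    have "\<bar>(A' - A) $ t \<bullet> x\<bar> \<le> dual_norm N ((A' - A) $ t) * N x" by (rule dual_ineq)
    also have "\<dots> \<le> P * N x" unfolding P_def by (rule mult_right_mono[OF pn_dual nonneg])
    finally show ?thesis by (simp add: abs_le_iff)
  qed
  have 3: "(b' - b) $ t \<le> P" unfolding P_def using pn_b[of "b' - b" t "A' - A"] by (simp add: abs_le_iff)
  have "A $ t \<bullet> x - b $ t \<le> P + P * N x" by (rule residual_aux[OF 1 2 3])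
  also have "P + P * N x = P * (1 + N x)" by (simp add: algebra_simps)
  finally show ?thesis by (simp only: P_def)
qed

end

definition hP :: "(real^'n \<Rightarrow> real) \<Rightarrow> real^'n^'m::finite \<Rightarrow> real^'m \<Rightarrow> real^'n \<Rightarrow> real \<Rightarrow> bool" where
  "hP N A b xb c \<longleftrightarrow> 0 \<le> c \<and> (\<exists>\<epsilon>>0. \<forall>x \<rho>. N (x - xb) < \<epsilon> \<longrightarrow> 0 \<le> \<rho> \<longrightarrow>
      (\<forall>t. A $ t \<bullet> x - b $ t \<le> \<rho>) \<longrightarrow> distN N x (feas A b) \<le> ereal (c * \<rho>))"

definition clmP :: "(real^'n \<Rightarrow> real) \<Rightarrow> real^'n^'m::finite \<Rightarrow> real^'m \<Rightarrow> real^'n \<Rightarrow> real \<Rightarrow> bool" where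
  "clmP N A b xb \<kappa> \<longleftrightarrow> 0 \<le> \<kappa> \<and> (\<exists>\<delta>>0. \<exists>\<epsilon>>0. \<forall>A' b'.
      param_norm N (A' - A) (b' - b) < \<delta> \<longrightarrow>
      (\<forall>x\<in>feas A' b'. N (x - xb) < \<epsilon> \<longrightarrow>
          distN N x (feas A b) \<le> ereal (\<kappa> * param_norm N (A' - A) (b' - b))))"

lemma clm_eq: "clm N A b xb = Inf {ereal \<kappa> | \<kappa>. clmP N A b xb \<kappa>}"
  by (simp add: clm_def clmP_def)

context nrm begin

lemma lemU:
  assumes "hP N A b xb c" "(1 + N xb) * c < \<kappa>"
  shows "clmP N A b xb \<kappa>"
proof -
  obtain \<epsilon> where c0: "0 \<le> c" and \<epsilon>: "\<epsilon> > 0" and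
    H: "\<And>x \<rho>. N (x - xb) < \<epsilon> \<Longrightarrow> 0 \<le> \<rho> \<Longrightarrow> (\<forall>t. A $ t \<bullet> x - b $ t \<le> \<rho>) \<Longrightarrow>
          distN N x (feas A b) \<le> ereal (c * \<rho>)"
    using assms(1) unfolding hP_def by blast
  define g where "g = \<kappa> - (1 + N xb) * c"
  have g: "g > 0" using assms(2) by (simp add: g_def)
  define \<epsilon>' where "\<epsilon>' = min \<epsilon> (g / (c + 1))"
  have e'pos: "\<epsilon>' > 0" using \<epsilon> g c0 by (simp add: \<epsilon>'_def)
  have "c * \<epsilon>' \<le> c * (g / (c + 1))" using c0 by (intro mult_left_mono) (auto simp: \<epsilon>'_def)
  also have "\<dots> \<le> g" using c0 g by (simp add: field_simps)
  finally have ce: "c * \<epsilon>' \<le> g" .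
  have k0: "0 \<le> \<kappa>" using assms(2) c0 nonneg[of xb] by (smt (verit) mult_nonneg_nonneg)
  have main: "distN N x (feas A b) \<le> ereal (\<kappa> * param_norm N (A' - A) (b' - b))"
    if x: "x \<in> feas A' b'" and xn: "N (x - xb) < \<epsilon>'" for A' b' x
  proof -
    define P where "P = param_norm N (A' - A) (b' - b)"
    have P0: "0 \<le> P" unfolding P_def by (rule pn_nonneg)
    have r: "\<forall>t. A $ t \<bullet> x - b $ t \<le> P * (1 + N x)" using residual[OF x] by (simp add: P_def)
    have "distN N x (feas A b) \<le> ereal (c * (P * (1 + N x)))"
      by (rule H) (use xn r P0 nonneg[of x] in \<open>auto simp: \<epsilon>'_def\<close>)
    also have "c * (P * (1 + N x)) \<le> \<kappa> * P"
    proof -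
      have "N x \<le> N xb + N (x - xb)" using triangle[of xb "x - xb"] by simp
      then have "N x \<le> N xb + \<epsilon>'" using xn by linarith
      then have "c * (1 + N x) \<le> c * (1 + N xb + \<epsilon>')" using c0 by (intro mult_left_mono) auto
      also have "\<dots> = (1 + N xb) * c + c * \<epsilon>'" by (simp add: algebra_simps)
      also have "\<dots> \<le> \<kappa>" using ce by (simp add: g_def)
      finally have "c * (1 + N x) \<le> \<kappa>" .
      then have "c * (1 + N x) * P \<le> \<kappa> * P" using P0 by (rule mult_right_mono)
      then show ?thesis by (simp add: algebra_simps)
    qed
    finally show ?thesis by (simp add: P_def)
  qed
  show ?thesis unfolding clmP_def
    using k0 e'pos main by (intro conjI exI[of _ 1] exI[of _ \<epsilon>']) auto
qed


lemma sum_dual_ge: "dual_norm N (A $ t) \<le> (\<Sum>s\<in>UNIV. dual_norm N (A $ s))"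
  by (rule member_le_sum) (auto simp: dual_nonneg)

lemma res_near:
  assumes "v \<in> feas A b"
  shows "A $ t \<bullet> x - b $ t \<le> (\<Sum>s\<in>UNIV. dual_norm N (A $ s)) * N (x - v)"
proof -
  have "A $ t \<bullet> v \<le> b $ t" using assms unfolding feas_def by blast
  moreover have "A $ t \<bullet> (x - v) \<le> dual_norm N (A $ t) * N (x - v)"
    using dual_ineq[of "A $ t" "x - v"] by linarith
  moreover have "dual_norm N (A $ t) * N (x - v) \<le> (\<Sum>s\<in>UNIV. dual_norm N (A $ s)) * N (x - v)"
    by (rule mult_right_mono[OF sum_dual_ge nonneg])
  ultimately show ?thesis by (simp add: inner_diff_right)
qed

lemma in_feas: "(\<And>t. A $ t \<bullet> x - b $ t \<le> 0) \<Longrightarrow> x \<in> feas A b"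
  unfolding feas_def by (auto simp: algebra_simps)

lemma lemL:
  assumes v: "v \<in> feas A b" and k: "clmP N A b v \<kappa>" and c: "\<kappa> / (1 + N v) < c"
  shows "hP N A b v c"
proof -
  obtain \<delta> \<epsilon> where k0: "0 \<le> \<kappa>" and \<delta>: "\<delta> > 0" and \<epsilon>: "\<epsilon> > 0" and
    K: "\<And>A' b' x. param_norm N (A' - A) (b' - b) < \<delta> \<Longrightarrow> x \<in> feas A' b' \<Longrightarrow> N (x - v) < \<epsilon> \<Longrightarrow>
          distN N x (feas A b) \<le> ereal (\<kappa> * param_norm N (A' - A) (b' - b))"
    using k unfolding clmP_def by blast
  have Nv1: "1 + N v > 0" using nonneg[of v] by linarith
  have kc: "\<kappa> < c * (1 + N v)" using c Nv1 by (simp add: divide_less_eq)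
  have c0: "c > 0" using c k0 Nv1 by (smt (verit) divide_nonneg_pos)
  define D where "D = (\<Sum>s\<in>UNIV. dual_norm N (A $ s))"
  have D0: "D \<ge> 0" unfolding D_def by (rule sum_nonneg) (simp add: dual_nonneg)
  define g where "g = c * (1 + N v) - \<kappa>"
  have g: "g > 0" using kc by (simp add: g_def)
  define \<epsilon>1 where "\<epsilon>1 = min (min \<epsilon> (1/2)) (min (g / (2 * c)) (\<delta> / (D + 1)))"
  have e1: "\<epsilon>1 > 0" using \<epsilon> g c0 \<delta> D0 by (simp add: \<epsilon>1_def)
  define \<eta> where "\<eta> = g / (2 * (\<kappa> + 1))"
  have eta: "\<eta> > 0" using g k0 by (simp add: \<eta>_def)
  have main: "distN N x (feas A b) \<le> ereal (c * \<rho>)"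
    if xn: "N (x - v) < \<epsilon>1" and r0: "0 \<le> \<rho>" and res: "\<forall>t. A $ t \<bullet> x - b $ t \<le> \<rho>" for x \<rho>
  proof -
    define \<rho>' where "\<rho>' = min \<rho> (D * N (x - v))"
    have res': "A $ t \<bullet> x - b $ t \<le> \<rho>'" for t
      using res res_near[OF v, of t x] by (simp add: \<rho>'_def D_def)
    have r'le: "\<rho>' \<le> \<rho>" by (simp add: \<rho>'_def)
    have cr: "0 \<le> c * \<rho>" using c0 r0 by simp
    show ?thesis
    proof (cases "\<rho>' \<le> 0")
      case True
      then have "x \<in> feas A b" using res' by (intro in_feas) (meson order_trans)
      then have "distN N x (feas A b) \<le> 0" by (rule distN_self)
      also have "(0::ereal) \<le> ereal (c * \<rho>)" using cr by simp
      finally show ?thesis .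
    next
      case False
      then have r'pos: "\<rho>' > 0" by simp
      obtain u where u1: "dual_norm N u \<le> 1" and u2: "N x \<le> (1 + \<eta>) * (u \<bullet> x)"
        using support[OF eta] by blast
      have ux0: "u \<bullet> x \<ge> 0" using u2 nonneg[of x] eta by (smt (verit) mult_nonneg_nonneg zero_le_mult_iff)
      define \<theta> where "\<theta> = \<rho>' / (1 + u \<bullet> x)"
      have th0: "\<theta> > 0" using r'pos ux0 by (simp add: \<theta>_def)
      have th_le: "\<theta> \<le> \<rho>'" using r'pos ux0 by (simp add: \<theta>_def divide_le_eq)
      have th_eq: "\<theta> * (1 + u \<bullet> x) = \<rho>'" using ux0 by (simp add: \<theta>_def)
      define A' where "A' = A - (\<chi> t. \<theta> *\<^sub>R u)"
      define b' where "b' = b + (\<chi> t. \<theta>)"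
      have dA: "(A' - A) $ t = - (\<theta> *\<^sub>R u)" for t by (simp add: A'_def)
      have db: "(b' - b) $ t = \<theta>" for t by (simp add: b'_def)
      have Pth: "param_norm N (A' - A) (b' - b) \<le> \<theta>"
      proof (rule pn_le)
        fix t
        have "dual_norm N (- (\<theta> *\<^sub>R u)) \<le> \<theta>"
        proof (rule dual_le)
          fix z assume z: "N z \<le> 1"
          have "\<bar>- (\<theta> *\<^sub>R u) \<bullet> z\<bar> = \<theta> * \<bar>u \<bullet> z\<bar>" using th0 by (simp add: abs_mult)
          also have "\<bar>u \<bullet> z\<bar> \<le> 1"
          proof -
            have "\<bar>u \<bullet> z\<bar> \<le> dual_norm N u * N z" by (rule dual_ineq)
            also have "\<dots> \<le> 1 * 1" using u1 z dual_nonneg[of u] nonneg[of z]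
              by (intro mult_mono) auto
            finally show ?thesis by simp
          qed
          then have "\<theta> * \<bar>u \<bullet> z\<bar> \<le> \<theta> * 1" using th0 by (intro mult_left_mono) auto
          finally show "\<bar>- (\<theta> *\<^sub>R u) \<bullet> z\<bar> \<le> \<theta>" by simp
        qed
        then show "dual_norm N ((A' - A) $ t) \<le> \<theta> \<and> \<bar>(b' - b) $ t\<bar> \<le> \<theta>"
          unfolding dA db using th0 by simp
      qed
      have P0: "0 \<le> param_norm N (A' - A) (b' - b)" by (rule pn_nonneg)
      have "D * N (x - v) \<le> D * (\<delta> / (D + 1))"
        using xn D0 by (intro mult_left_mono) (auto simp: \<epsilon>1_def)
      also have "\<dots> < \<delta>" using D0 \<delta> by (simp add: field_simps)
      finally have "\<rho>' < \<delta>" unfolding \<rho>'_def by linarith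
      then have Pd: "param_norm N (A' - A) (b' - b) < \<delta>" using Pth th_le by linarith
      have xF: "x \<in> feas A' b'"
      proof -
        have "A' $ t \<bullet> x \<le> b' $ t" for t
        proof -
          have "A' $ t \<bullet> x = A $ t \<bullet> x - \<theta> * (u \<bullet> x)" by (simp add: A'_def inner_diff_left)
          also have "\<dots> \<le> b $ t + \<rho>' - \<theta> * (u \<bullet> x)" using res'[of t] by linarith
          also have "\<dots> = b $ t + \<theta>" using th_eq by (simp add: algebra_simps)
          also have "\<dots> = b' $ t" by (simp add: b'_def)
          finally show ?thesis .
        qed
        then show ?thesis by (simp add: feas_def)
      qed
      have xe: "N (x - v) < \<epsilon>" using xn by (simp add: \<epsilon>1_def)
      have "distN N x (feas A b) \<le> ereal (\<kappa> * param_norm N (A' - A) (b' - b))"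
        by (rule K[OF Pd xF xe])
      also have "\<kappa> * param_norm N (A' - A) (b' - b) \<le> \<kappa> * \<theta>"
        using Pth k0 by (rule mult_left_mono)
      also have "\<kappa> * \<theta> \<le> c * \<rho>'"
      proof -
        have "N x \<ge> N v - N (x - v)" using triangle[of "v - x" x] Ncommute[of x v] by simp
        then have Nx: "N x \<ge> N v - \<epsilon>1" using xn by linarith
        have "(1 + \<eta>) * (1 + u \<bullet> x) = 1 + \<eta> + (1 + \<eta>) * (u \<bullet> x)" by (simp add: algebra_simps)
        also have "\<dots> \<ge> 1 + N v - \<epsilon>1" using u2 Nx eta by linarith
        finally have A1: "(1 + \<eta>) * (1 + u \<bullet> x) \<ge> 1 + N v - \<epsilon>1" .
        have "c * \<epsilon>1 \<le> c * (g / (2 * c))" using c0 by (intro mult_left_mono) (auto simp: \<epsilon>1_def)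
        also have "\<dots> = g / 2" using c0 by simp
        finally have ce: "c * \<epsilon>1 \<le> g / 2" .
        have "\<kappa> * \<eta> \<le> g / 2"
        proof -
          have "\<kappa> * \<eta> = g / 2 * (\<kappa> / (\<kappa> + 1))" by (simp add: \<eta>_def field_simps)
          also have "\<dots> \<le> g / 2 * 1" using g k0 by (intro mult_left_mono) auto
          finally show ?thesis by simp
        qed
        then have "\<kappa> * (1 + \<eta>) \<le> c * (1 + N v - \<epsilon>1)" using ce by (simp add: g_def algebra_simps)
        also have "\<dots> \<le> c * ((1 + \<eta>) * (1 + u \<bullet> x))" using A1 c0 by (intro mult_left_mono) auto
        finally have "\<kappa> * (1 + \<eta>) \<le> (c * (1 + u \<bullet> x)) * (1 + \<eta>)" by (simp add: algebra_simps)
        then have kk: "\<kappa> \<le> c * (1 + u \<bullet> x)" using eta by simp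
        have "\<kappa> * \<theta> \<le> c * (1 + u \<bullet> x) * \<theta>" using kk th0 by (intro mult_right_mono) auto
        also have "\<dots> = c * (\<theta> * (1 + u \<bullet> x))" by (simp add: algebra_simps)
        also have "\<dots> = c * \<rho>'" using th_eq by simp
        finally show ?thesis .
      qed
      also have "c * \<rho>' \<le> c * \<rho>" using c0 r'le by simp
      finally show ?thesis by simp
    qed
  qed
  show ?thesis unfolding hP_def using c0 e1 main by (intro conjI exI[of _ \<epsilon>1]) auto
qed


lemma lemM:
  assumes xb: "xb \<in> feas A b" and v: "v \<in> feas A b"
    and act: "\<And>t. A $ t \<bullet> xb = b $ t \<Longrightarrow> A $ t \<bullet> v = b $ t"
    and h: "hP N A b v c"
  shows "hP N A b xb c"
proof -
  obtain \<epsilon> where c0: "0 \<le> c" and \<epsilon>: "\<epsilon> > 0" and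
    H: "\<And>x \<rho>. N (x - v) < \<epsilon> \<Longrightarrow> 0 \<le> \<rho> \<Longrightarrow> (\<forall>t. A $ t \<bullet> x - b $ t \<le> \<rho>) \<Longrightarrow>
          distN N x (feas A b) \<le> ereal (c * \<rho>)"
    using h unfolding hP_def by blast
  define D where "D = (\<Sum>s\<in>UNIV. dual_norm N (A $ s))"
  have D0: "D \<ge> 0" unfolding D_def by (rule sum_nonneg) (simp add: dual_nonneg)
  define sl where "sl = (\<lambda>t. if A $ t \<bullet> xb < b $ t then b $ t - A $ t \<bullet> xb else 1)"
  define \<sigma> where "\<sigma> = Min (range sl)"
  have sig0: "\<sigma> > 0" unfolding \<sigma>_def by (subst Min_gr_iff) (auto simp: sl_def)
  have sig_le: "\<sigma> \<le> b $ t - A $ t \<bullet> xb" if "A $ t \<bullet> xb < b $ t" for t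
  proof -
    have "\<sigma> \<le> sl t" unfolding \<sigma>_def by (rule Min_le) auto
    then show ?thesis using that by (simp add: sl_def)
  qed
  define \<epsilon>' where "\<epsilon>' = \<sigma> / (2 * (D + 1) * (2 + c * D))"
  have cD: "0 \<le> c * D" using c0 D0 by simp
  have e'pos: "\<epsilon>' > 0" using sig0 D0 cD by (simp add: \<epsilon>'_def)
  have De': "D * (\<epsilon>' * (2 + c * D)) \<le> \<sigma> / 2"
  proof -
    have "\<epsilon>' * (2 + c * D) = \<sigma> / (2 * (D + 1))"
      using D0 cD by (simp add: \<epsilon>'_def)
    then have "D * (\<epsilon>' * (2 + c * D)) = \<sigma> / 2 * (D / (D + 1))"
      by simp
    also have "\<dots> \<le> \<sigma> / 2 * 1" using sig0 D0 by (intro mult_left_mono) auto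
    finally show ?thesis by simp
  qed
  have main: "distN N x (feas A b) \<le> ereal (c * \<rho>)"
    if xn: "N (x - xb) < \<epsilon>'" and r0: "0 \<le> \<rho>" and res: "\<forall>t. A $ t \<bullet> x - b $ t \<le> \<rho>" for x \<rho>
  proof -
    define \<rho>' where "\<rho>' = min \<rho> (D * N (x - xb))"
    have res': "A $ t \<bullet> x - b $ t \<le> \<rho>'" for t
      using res res_near[OF xb, of t x] by (simp add: \<rho>'_def D_def)
    have r'le: "\<rho>' \<le> \<rho>" by (simp add: \<rho>'_def)
    have r'D: "\<rho>' \<le> D * \<epsilon>'"
    proof -
      have "D * N (x - xb) \<le> D * \<epsilon>'" using xn D0 by (intro mult_left_mono) auto
      then show ?thesis by (simp add: \<rho>'_def)
    qed
    have cr: "0 \<le> c * \<rho>" using c0 r0 by simp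
    show ?thesis
    proof (cases "\<rho>' \<le> 0")
      case True
      then have "x \<in> feas A b" using res' by (intro in_feas) (meson order_trans)
      then have "distN N x (feas A b) \<le> 0" by (rule distN_self)
      also have "(0::ereal) \<le> ereal (c * \<rho>)" using cr by simp
      finally show ?thesis .
    next
      case False
      then have r'pos: "\<rho>' > 0" by simp
      have key: "distN N x (feas A b) \<le> ereal (c * \<rho>') + ereal e" if e: "e > 0" for e
      proof -
        define e' where "e' = min e \<epsilon>'"
        have e'0: "e' > 0" using e e'pos by (simp add: e'_def)
        define \<tau> where "\<tau> = min 1 (\<epsilon> / (2 * (N (x - v) + 1)))"
        have Nxv: "N (x - v) \<ge> 0" by (rule nonneg)
        have tau0: "\<tau> > 0" using \<epsilon> Nxv by (simp add: \<tau>_def)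
        have tau1: "\<tau> \<le> 1" by (simp add: \<tau>_def)
        have taue: "\<tau> * N (x - v) < \<epsilon>"
        proof -
          have "\<tau> * N (x - v) \<le> (\<epsilon> / (2 * (N (x - v) + 1))) * N (x - v)"
            using Nxv by (intro mult_right_mono) (auto simp: \<tau>_def)
          also have "\<dots> = \<epsilon> / 2 * (N (x - v) / (N (x - v) + 1))" using Nxv by (simp add: field_simps)
          also have "\<dots> \<le> \<epsilon> / 2 * 1" using \<epsilon> Nxv by (intro mult_left_mono) auto
          also have "\<dots> < \<epsilon>" using \<epsilon> by simp
          finally show ?thesis .
        qed
        define y where "y = v + \<tau> *\<^sub>R (x - v)"
        have yv: "N (y - v) < \<epsilon>" using taue tau0 by (simp add: y_def scale)
        have Ay: "A $ t \<bullet> y = A $ t \<bullet> v + \<tau> * (A $ t \<bullet> x - A $ t \<bullet> v)" for t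
          by (simp add: y_def inner_add_right inner_diff_right)
        have resy: "\<forall>t. A $ t \<bullet> y - b $ t \<le> \<tau> * \<rho>'"
        proof
          fix t
          have av: "A $ t \<bullet> v \<le> b $ t" using v unfolding feas_def by blast
          have "A $ t \<bullet> y - b $ t = (1 - \<tau>) * (A $ t \<bullet> v - b $ t) + \<tau> * (A $ t \<bullet> x - b $ t)"
            by (simp add: Ay algebra_simps)
          also have "\<dots> \<le> 0 + \<tau> * \<rho>'"
            using av tau1 tau0 res'[of t]
            by (intro add_mono mult_left_mono) (auto intro: mult_nonneg_nonpos)
          finally show "A $ t \<bullet> y - b $ t \<le> \<tau> * \<rho>'" by simp
        qed
        have d1: "distN N y (feas A b) \<le> ereal (c * (\<tau> * \<rho>'))"
          by (rule H[OF yv _ resy]) (use tau0 r'pos in simp)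
        have "c * (\<tau> * \<rho>') < \<tau> * (c * \<rho>' + e')" using tau0 e'0 by (simp add: algebra_simps)
        then have "ereal (c * (\<tau> * \<rho>')) < ereal (\<tau> * (c * \<rho>' + e'))" by simp
        with d1 have "distN N y (feas A b) < ereal (\<tau> * (c * \<rho>' + e'))" by (rule order_le_less_trans)
        then obtain z where zF: "z \<in> feas A b" and zy: "N (y - z) < \<tau> * (c * \<rho>' + e')"
          using distN_lessE by blast
        define w where "w = x + (1 / \<tau>) *\<^sub>R (z - y)"
        have xw_eq: "N (x - w) = N ((1 / \<tau>) *\<^sub>R (z - y))" by (simp add: w_def Nminus)
        have xw: "N (x - w) < c * \<rho>' + e'"
        proof -
          have "N (x - w) = N ((1 / \<tau>) *\<^sub>R (z - y))" by (rule xw_eq)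
          also have "\<dots> = N (z - y) / \<tau>" using tau0 by (simp add: scale)
          also have "\<dots> = N (y - z) / \<tau>" using Ncommute by simp
          also have "\<dots> < c * \<rho>' + e'" using zy tau0 by (simp add: divide_less_eq mult.commute)
          finally show ?thesis .
        qed
        have wF: "w \<in> feas A b"
        proof -
          have "A $ t \<bullet> w \<le> b $ t" for t
          proof (cases "A $ t \<bullet> v = b $ t")
            case True
            have az: "A $ t \<bullet> z \<le> b $ t" using zF unfolding feas_def by blast
            have "A $ t \<bullet> w = A $ t \<bullet> x + (A $ t \<bullet> z - A $ t \<bullet> y) / \<tau>"
              by (simp add: w_def inner_add_right inner_diff_right)
            also have "\<dots> = b $ t + (A $ t \<bullet> z - b $ t) / \<tau>"
              using tau0 True by (simp add: Ay field_simps)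
            also have "\<dots> \<le> b $ t" using az tau0 by (simp add: divide_nonpos_pos)
            finally show ?thesis .
          next
            case False
            have "A $ t \<bullet> xb \<le> b $ t" using xb unfolding feas_def by blast
            then have lt: "A $ t \<bullet> xb < b $ t" using act[of t] False by force
            have dt: "dual_norm N (A $ t) \<le> D" unfolding D_def by (rule sum_dual_ge)
            have i1: "A $ t \<bullet> (x - xb) \<le> D * \<epsilon>'"
            proof -
              have "A $ t \<bullet> (x - xb) \<le> dual_norm N (A $ t) * N (x - xb)"
                using dual_ineq[of "A $ t" "x - xb"] by linarith
              also have "\<dots> \<le> D * \<epsilon>'" using dt xn nonneg[of "x - xb"] dual_nonneg[of "A $ t"]
                by (intro mult_mono) auto
              finally show ?thesis .
            qed
            have i2: "A $ t \<bullet> ((1 / \<tau>) *\<^sub>R (z - y)) \<le> D * (c * \<rho>' + e')"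
            proof -
              have "A $ t \<bullet> ((1 / \<tau>) *\<^sub>R (z - y)) \<le> dual_norm N (A $ t) * N ((1 / \<tau>) *\<^sub>R (z - y))"
                using dual_ineq[of "A $ t" "(1 / \<tau>) *\<^sub>R (z - y)"] by linarith
              also have "N ((1 / \<tau>) *\<^sub>R (z - y)) = N (x - w)"
                by (rule xw_eq[symmetric])
              also have "dual_norm N (A $ t) * N (x - w) \<le> D * (c * \<rho>' + e')"
                using dt xw nonneg[of "x - w"] dual_nonneg[of "A $ t"]
                by (intro mult_mono) auto
              finally show ?thesis .
            qed
            have "c * \<rho>' \<le> c * (D * \<epsilon>')" using r'D c0 by (rule mult_left_mono)
            then have "D * (c * \<rho>' + e') \<le> D * (c * (D * \<epsilon>') + \<epsilon>')"
              using D0 by (intro mult_left_mono) (auto simp: e'_def)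
            then have "D * \<epsilon>' + D * (c * \<rho>' + e') \<le> D * (\<epsilon>' * (2 + c * D))"
              by (simp add: algebra_simps)
            then have "D * \<epsilon>' + D * (c * \<rho>' + e') \<le> \<sigma> / 2" using De' by linarith
            moreover have "A $ t \<bullet> w = A $ t \<bullet> xb + A $ t \<bullet> (x - xb) + A $ t \<bullet> ((1 / \<tau>) *\<^sub>R (z - y))"
              by (simp add: w_def inner_add_right inner_diff_right)
            ultimately show ?thesis using i1 i2 sig_le[OF lt] sig0 by linarith
          qed
          then show ?thesis by (simp add: feas_def)
        qed
        have "distN N x (feas A b) \<le> ereal (N (x - w))" by (rule distN_le[OF wF])
        also have "N (x - w) \<le> c * \<rho>' + e" using xw by (simp add: e'_def)
        finally show ?thesis by simp
      qed
      have "distN N x (feas A b) \<le> ereal (c * \<rho>')" by (rule ereal_le_epsilon2) (use key in auto)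
      also have "c * \<rho>' \<le> c * \<rho>" using r'le c0 by (rule mult_left_mono)
      finally show ?thesis by simp
    qed
  qed
  show ?thesis unfolding hP_def using c0 e'pos main by (intro conjI exI[of _ \<epsilon>']) auto
qed

end

lemma feas_polyhedron: "polyhedron (feas A b)"
proof -
  have "feas A b = \<Inter> ((\<lambda>t. {x. A $ t \<bullet> x \<le> b $ t}) ` UNIV)" by (auto simp: feas_def)
  then show ?thesis by (auto intro!: polyhedron_Inter polyhedron_halfspace_le)
qed

lemma feas_closed: "closed (feas A b)"
  by (rule polyhedron_imp_closed[OF feas_polyhedron])

lemma feas_convex: "convex (feas A b)"
  using feas_polyhedron polyhedron_imp_convex by blast

lemma unbounded_dir:
  assumes x0: "x0 \<in> feas A b" and d: "d \<noteq> 0" and dir: "\<And>t. A $ t \<bullet> d \<le> 0"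
  shows "\<not> bounded (feas A b)"
proof
  assume "bounded (feas A b)"
  then obtain B where B: "\<And>x. x \<in> feas A b \<Longrightarrow> norm x \<le> B" by (auto simp: bounded_iff)
  have nd: "norm d > 0" using d by simp
  define s where "s = (B + norm x0 + 1) / norm d"
  have B0: "B \<ge> 0" using B[OF x0] norm_ge_zero[of x0] by linarith
  have s0: "s \<ge> 0" using nd B0 by (simp add: s_def)
  have "x0 + s *\<^sub>R d \<in> feas A b"
  proof -
    have "A $ t \<bullet> (x0 + s *\<^sub>R d) \<le> b $ t" for t
    proof -
      have "A $ t \<bullet> x0 \<le> b $ t" using x0 unfolding feas_def by blast
      moreover have "s * (A $ t \<bullet> d) \<le> 0" using s0 dir[of t] by (simp add: mult_nonneg_nonpos)
      ultimately show ?thesis by (simp add: inner_add_right)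
    qed
    then show ?thesis by (simp add: feas_def)
  qed
  then have "norm (x0 + s *\<^sub>R d) \<le> B" by (rule B)
  moreover have "norm (x0 + s *\<^sub>R d) \<ge> s * norm d - norm x0"
    using norm_triangle_ineq2[of "s *\<^sub>R d" "- x0"] s0 by (simp add: algebra_simps)
  moreover have "s * norm d = B + norm x0 + 1" using nd by (simp add: s_def)
  ultimately show False by linarith
qed

lemma span_full:
  assumes ne: "feas A b \<noteq> {}" and bd: "bounded (feas A b)"
  shows "span (range (\<lambda>t. A $ t)) = UNIV"
proof (rule ccontr)
  assume "span (range (\<lambda>t. A $ t)) \<noteq> UNIV"
  then obtain d where d: "d \<noteq> 0" and o: "span (range (\<lambda>t. A $ t)) \<subseteq> {x. d \<bullet> x = 0}"
    using span_not_univ_subset_hyperplane by blast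
  have "A $ t \<bullet> d = 0" for t
    using o span_base[of "A $ t" "range (\<lambda>t. A $ t)"] by (auto simp: inner_commute)
  then have "\<not> bounded (feas A b)" using ne d unbounded_dir by fastforce
  then show False using bd by simp
qed

lemma extr_set_eq:
  assumes "feas A b \<noteq> {}" "bounded (feas A b)"
  shows "extr_set A b = {v. v extreme_point_of (feas A b)}"
  unfolding extr_set_def using span_full[OF assms] by simp

lemma extr_finite: "finite {v. v extreme_point_of (feas A b)}"
  by (rule finite_polyhedron_extreme_points[OF feas_polyhedron])

context nrm begin

lemma testM:
  assumes xb: "xb \<in> feas A b" and v: "v \<in> feas A b"
    and act: "\<And>t. A $ t \<bullet> xb = b $ t \<Longrightarrow> A $ t \<bullet> v = b $ t"
    and h: "hP N A b v c"
  shows "hP N A b xb c"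
  using lemM[OF xb v act h] .


lemma Nconvex: "convex_on UNIV N"
proof (rule convex_onI)
  fix t :: real and x y :: "real^'n"
  show "0 < t \<Longrightarrow> t < 1 \<Longrightarrow> N ((1 - t) *\<^sub>R x + t *\<^sub>R y) \<le> (1 - t) * N x + t * N y"
    using triangle[of "(1 - t) *\<^sub>R x" "t *\<^sub>R y"] by (simp add: scale)
qed simp

lemma face_vertex:
  assumes ne: "feas A b \<noteq> {}" and bd: "bounded (feas A b)" and xb: "xb \<in> feas A b"
  obtains v where "v extreme_point_of (feas A b)" "N xb \<le> N v"
    "\<And>t. A $ t \<bullet> xb = b $ t \<Longrightarrow> A $ t \<bullet> v = b $ t"
proof -
  define F where "F = feas A b"
  define I where "I = {t. A $ t \<bullet> xb = b $ t}"
  define c where "c = (\<Sum>t\<in>I. A $ t)"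
  define d where "d = (\<Sum>t\<in>I. b $ t)"
  have cx: "c \<bullet> x = (\<Sum>t\<in>I. A $ t \<bullet> x)" for x by (simp add: c_def inner_sum_left)
  have le: "c \<bullet> x \<le> d" if "x \<in> F" for x
    unfolding cx d_def using that by (intro sum_mono) (auto simp: F_def feas_def)
  define S where "S = F \<inter> {x. c \<bullet> x = d}"
  have face: "S face_of F" unfolding S_def
    by (rule face_of_Int_supporting_hyperplane_le) (use le feas_convex in \<open>auto simp: F_def\<close>)
  have inS: "\<forall>t\<in>I. A $ t \<bullet> y = b $ t" if "y \<in> S" for y
  proof -
    have yF: "y \<in> F" and eq: "c \<bullet> y = d" using that by (auto simp: S_def)
    have "(\<Sum>t\<in>I. b $ t - A $ t \<bullet> y) = 0" using eq by (simp add: cx d_def sum_subtractf)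
    moreover have "\<forall>t\<in>I. 0 \<le> b $ t - A $ t \<bullet> y" using yF by (auto simp: F_def feas_def)
    ultimately have "\<forall>t\<in>I. b $ t - A $ t \<bullet> y = 0"
      using sum_nonneg_eq_0_iff[of I "\<lambda>t. b $ t - A $ t \<bullet> y"] by auto
    then show ?thesis by simp
  qed
  have xbS: "xb \<in> S" using xb by (simp add: S_def F_def cx d_def I_def)
  have cF: "compact F" using bd feas_closed by (simp add: F_def compact_eq_bounded_closed)
  have cS: "compact S" unfolding S_def
    by (rule closed_Int_compact[OF _ cF, simplified Int_commute]) (auto intro: closed_hyperplane)
  have cvS: "convex S" using face face_of_imp_convex by blast
  define E where "E = {x. x extreme_point_of S}"
  have ES: "E \<subseteq> {v. v extreme_point_of F}" using face extreme_point_of_face by (auto simp: E_def)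
  have "finite {v. v extreme_point_of F}" unfolding F_def by (rule extr_finite)
  then have fE: "finite E" using ES finite_subset by blast
  have hull: "S = convex hull E" unfolding E_def by (rule Krein_Milman_Minkowski[OF cS cvS])
  then have Ene: "E \<noteq> {}" using xbS by auto
  define m where "m = Max (N ` E)"
  have "\<forall>x\<in>E. N x \<le> m" using fE by (auto simp: m_def)
  then have "\<forall>x\<in>convex hull E. N x \<le> m" using convex_on_subset[OF Nconvex, of "convex hull E"]
    by (intro convex_on_convex_hull_bound) (auto simp: convex_convex_hull)
  then have "N xb \<le> m" using xbS hull by auto
  moreover have "m \<in> N ` E" unfolding m_def using fE Ene by (intro Max_in) auto
  then obtain v where vE: "v \<in> E" and "m = N v" by blast
  ultimately have "N xb \<le> N v" by simp
  moreover have "v extreme_point_of (feas A b)" using vE ES by (auto simp: F_def)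
  moreover have "v \<in> S" using vE by (auto simp: E_def extreme_point_of_def)
  then have "\<And>t. A $ t \<bullet> xb = b $ t \<Longrightarrow> A $ t \<bullet> v = b $ t" using inS by (auto simp: I_def)
  ultimately show ?thesis using that by blast
qed

lemma clm_le:
  assumes xb: "xb \<in> feas A b" and v: "v \<in> feas A b"
    and act: "\<And>t. A $ t \<bullet> xb = b $ t \<Longrightarrow> A $ t \<bullet> v = b $ t"
    and Nle: "N xb \<le> N v"
  shows "clm N A b xb \<le> clm N A b v"
  unfolding clm_eq[of N A b v]
proof (rule Inf_greatest)
  fix y assume "y \<in> {ereal \<kappa> |\<kappa>. clmP N A b v \<kappa>}"
  then obtain \<kappa> where y: "y = ereal \<kappa>" and k: "clmP N A b v \<kappa>" by blast
  have k0: "0 \<le> \<kappa>" using k by (simp add: clmP_def)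
  have Nv1: "1 + N v > 0" using nonneg[of v] by linarith
  have "clm N A b xb \<le> ereal \<kappa> + ereal e" if e: "e > 0" for e
  proof -
    define c where "c = (\<kappa> + e / 2) / (1 + N v)"
    have "\<kappa> / (1 + N v) < c" using e Nv1 by (simp add: c_def divide_strict_right_mono)
    then have hv: "hP N A b v c" by (rule lemL[OF v k])
    have h: "hP N A b xb c" using lemM[OF xb v act hv] .
    have c0: "c \<ge> 0" using k0 e Nv1 by (simp add: c_def)
    have "(1 + N xb) * c \<le> (1 + N v) * c" using Nle c0 by (intro mult_right_mono) auto
    also have "\<dots> = \<kappa> + e / 2" using Nv1 by (simp add: c_def)
    also have "\<dots> < \<kappa> + e" using e by simp
    finally have "clmP N A b xb (\<kappa> + e)" by (rule lemU[OF h])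
    then have "clm N A b xb \<le> ereal (\<kappa> + e)" unfolding clm_eq by (intro Inf_lower) blast
    then show ?thesis by simp
  qed
  then show "clm N A b xb \<le> y" unfolding y by (rule ereal_le_epsilon2)
qed

end

lemma compact_pos:
  fixes f :: "'m::finite \<Rightarrow> 'a::topological_space \<Rightarrow> real"
  assumes K: "compact K" and cf: "\<And>t. continuous_on K (f t)" and pos: "\<And>x. x \<in> K \<Longrightarrow> \<exists>t. f t x > 0"
  obtains \<eta> where "\<eta> > 0" "\<And>x. x \<in> K \<Longrightarrow> \<exists>t. f t x > \<eta>"
proof (cases "K = {}")
  case True
  then show ?thesis using that[of 1] by auto
next
  case False
  define g where "g = (\<lambda>x. \<Sum>t\<in>UNIV. max 0 (f t x))"
  have cg: "continuous_on K g" unfolding g_def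
    by (intro continuous_on_sum continuous_on_max continuous_on_const cf)
  obtain x0 where x0: "x0 \<in> K" "\<forall>y\<in>K. g x0 \<le> g y"
    using continuous_attains_inf[OF K False cg] by blast
  obtain t0 where t0: "f t0 x0 > 0" using pos x0(1) by blast
  have "max 0 (f t0 x0) \<le> g x0" unfolding g_def by (rule member_le_sum) auto
  then have m: "g x0 > 0" using t0 by linarith
  have card: "real CARD('m) > 0" by simp
  define \<eta> where "\<eta> = g x0 / (2 * real CARD('m))"
  have eta: "\<eta> > 0" using m card by (simp add: \<eta>_def)
  show ?thesis
  proof (rule that[OF eta])
    fix x assume x: "x \<in> K"
    show "\<exists>t. f t x > \<eta>"
    proof (rule ccontr)
      assume "\<not> (\<exists>t. f t x > \<eta>)"
      then have le: "\<forall>t. f t x \<le> \<eta>" by (auto simp: not_less)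
      have "g x \<le> (\<Sum>t\<in>(UNIV::'m set). \<eta>)" unfolding g_def using le eta by (intro sum_mono) auto
      also have "\<dots> = real CARD('m) * \<eta>" by simp
      also have "\<dots> = g x0 / 2" using card by (simp add: \<eta>_def)
      also have "\<dots> < g x0" using m by simp
      finally show False using x0(2) x by fastforce
    qed
  qed
qed

lemma compact_pos_ex:
  fixes f :: "'m::finite \<Rightarrow> 'a::topological_space \<Rightarrow> real"
  assumes "compact K" "\<And>t. continuous_on K (f t)" "\<And>x. x \<in> K \<Longrightarrow> \<exists>t. f t x > 0"
  shows "\<exists>\<eta>>0. \<forall>x\<in>K. \<exists>t. f t x > \<eta>"
  by (rule compact_pos[OF assms]) auto

definition LipP :: "(real^'n \<Rightarrow> real) \<Rightarrow> real^'n^'m::finite \<Rightarrow> real^'m \<Rightarrow> real \<Rightarrow> bool" where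
  "LipP N A b \<kappa> \<longleftrightarrow> 0 \<le> \<kappa> \<and> (\<exists>\<delta>>0. \<forall>A' b'.
      param_norm N (A' - A) (b' - b) < \<delta> \<longrightarrow>
      (\<forall>x\<in>feas A' b'. distN N x (feas A b) \<le> ereal (\<kappa> * param_norm N (A' - A) (b' - b))))"

lemma Lipusc_eq: "Lipusc N A b = Inf {ereal \<kappa> | \<kappa>. LipP N A b \<kappa>}"
  by (simp add: Lipusc_def LipP_def)

context nrm begin

lemma pert_bounded:
  assumes ne: "feas A b \<noteq> {}" and bd: "bounded (feas A b)"
  obtains R \<delta> where "\<delta> > 0"
    "\<And>A' b' x. param_norm N (A' - A) (b' - b) < \<delta> \<Longrightarrow> x \<in> feas A' b' \<Longrightarrow> norm x \<le> R"
proof -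
  obtain x0 where x0: "x0 \<in> feas A b" using ne by blast
  have pos: "\<exists>t. A $ t \<bullet> d > 0" if "d \<in> sphere 0 1" for d
  proof (rule ccontr)
    assume "\<not> (\<exists>t. A $ t \<bullet> d > 0)"
    then have "\<And>t. A $ t \<bullet> d \<le> 0" by (auto simp: not_less)
    moreover have "d \<noteq> 0" using that by auto
    ultimately have "\<not> bounded (feas A b)" using unbounded_dir[OF x0] by blast
    with bd show False by simp
  qed
  have cs: "compact (sphere (0::real^'n) 1)" by simp
  have cf: "\<And>t. continuous_on (sphere 0 1) (\<lambda>d. A $ t \<bullet> d)" by (intro continuous_intros)
  obtain \<eta> where eta: "\<eta> > 0" and H: "\<And>d. d \<in> sphere 0 1 \<Longrightarrow> \<exists>t. A $ t \<bullet> d > \<eta>"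
    using compact_pos[OF cs cf pos] by blast
  obtain cd where cd: "cd > 0" "\<And>u. cd * norm u \<le> dual_norm N u" by (rule dual_lower) blast
  define B where "B = (\<Sum>t\<in>UNIV. \<bar>b $ t\<bar>)"
  have B0: "B \<ge> 0" unfolding B_def by (rule sum_nonneg) simp
  have Bt: "\<bar>b $ t\<bar> \<le> B" for t unfolding B_def by (rule member_le_sum) auto
  define \<delta> where "\<delta> = min 1 (\<eta> * cd / 2)"
  define R where "R = 2 * (B + 1) / \<eta>"
  show ?thesis
  proof (rule that[of \<delta> R])
    show "\<delta> > 0" using eta cd by (simp add: \<delta>_def)
    fix A' b' x assume P: "param_norm N (A' - A) (b' - b) < \<delta>" and x: "x \<in> feas A' b'"
    define P where "P = param_norm N (A' - A) (b' - b)"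
    have Pd: "P < \<delta>" using P by (simp add: P_def)
    show "norm x \<le> R"
    proof (cases "x = 0")
      case True
      then show ?thesis using eta B0 by (simp add: R_def)
    next
      case False
      then have nx: "norm x > 0" by simp
      define d where "d = (1 / norm x) *\<^sub>R x"
      have "d \<in> sphere 0 1" using False by (simp add: d_def)
      then obtain t where t: "A $ t \<bullet> d > \<eta>" using H by blast
      have "A $ t \<bullet> x = norm x * (A $ t \<bullet> d)" using nx by (simp add: d_def)
      moreover have "norm x * \<eta> < norm x * (A $ t \<bullet> d)" using nx t by simp
      ultimately have t': "\<eta> * norm x < A $ t \<bullet> x" by (simp add: mult.commute)
      have feas: "A' $ t \<bullet> x \<le> b' $ t" using x unfolding feas_def by blast
      have nA: "norm ((A' - A) $ t) \<le> \<eta> / 2"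
      proof -
        have "cd * norm ((A' - A) $ t) \<le> P" unfolding P_def by (rule order_trans[OF cd(2) pn_dual])
        also have "P \<le> \<eta> * cd / 2" using Pd by (simp add: \<delta>_def)
        finally have "cd * norm ((A' - A) $ t) \<le> cd * (\<eta> / 2)" by (simp add: mult.commute)
        then show ?thesis using cd(1) by simp
      qed
      have q: "(A' - A) $ t \<bullet> x \<ge> - (\<eta> / 2 * norm x)"
      proof -
        have "\<bar>(A' - A) $ t \<bullet> x\<bar> \<le> norm ((A' - A) $ t) * norm x" by (rule Cauchy_Schwarz_ineq2)
        also have "\<dots> \<le> \<eta> / 2 * norm x" using nA by (intro mult_right_mono) auto
        finally show ?thesis by (simp add: abs_le_iff)
      qed
      have pb: "(b' - b) $ t \<le> 1"
      proof -
        have "\<bar>(b' - b) $ t\<bar> \<le> P" using pn_b[of "b' - b" t "A' - A"] by (simp add: P_def)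
        then show ?thesis using Pd by (simp add: \<delta>_def abs_le_iff)
      qed
      have "A $ t \<bullet> x - b $ t \<le> 1 + \<eta> / 2 * norm x" by (rule residual_aux[OF feas q pb])
      then have "\<eta> * norm x < B + 1 + \<eta> / 2 * norm x" using t' Bt[of t] by (simp add: abs_le_iff)
      then have "\<eta> * norm x < 2 * (B + 1)" by simp
      then show ?thesis using eta by (simp add: R_def pos_le_divide_eq mult.commute)
    qed
  qed
qed

lemma Ncont_shift: "continuous_on UNIV (\<lambda>x. N (x - z))"
  by (rule continuous_on_compose2[OF cont[of UNIV]]) (auto intro!: continuous_intros)

lemma usc:
  assumes ne: "feas A b \<noteq> {}" and bd: "bounded (feas A b)" and e: "\<epsilon> > 0"
  obtains \<delta> where "\<delta> > 0"
    "\<And>A' b' x. param_norm N (A' - A) (b' - b) < \<delta> \<Longrightarrow> x \<in> feas A' b' \<Longrightarrow> \<exists>z\<in>feas A b. N (x - z) < \<epsilon>"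
proof -
  obtain R \<delta>1 where d1: "\<delta>1 > 0" and
    RB: "\<And>A' b' x. param_norm N (A' - A) (b' - b) < \<delta>1 \<Longrightarrow> x \<in> feas A' b' \<Longrightarrow> norm x \<le> R"
    by (rule pert_bounded[OF ne bd]) blast
  define R' where "R' = max R 0"
  define K where "K = cball 0 R' \<inter> (\<Inter>z\<in>feas A b. {x. \<epsilon> \<le> N (x - z)})"
  have cl1: "closed {x. \<epsilon> \<le> N (x - z)}" for z
    by (rule closed_Collect_le[OF continuous_on_const Ncont_shift])
  have cl2: "closed (\<Inter>z\<in>feas A b. {x. \<epsilon> \<le> N (x - z)})"
    using cl1 by (intro closed_INT) blast
  have clK: "closed K" unfolding K_def by (rule closed_Int[OF closed_cball cl2])
  have "K \<subseteq> cball 0 R'" unfolding K_def by (rule Int_lower1)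
  then have bK: "bounded K" by (rule bounded_subset[OF bounded_cball])
  have cK: "compact K" using clK bK by (simp add: compact_eq_bounded_closed)
  have pos: "\<exists>t. A $ t \<bullet> x - b $ t > 0" if "x \<in> K" for x
  proof (rule ccontr)
    assume "\<not> (\<exists>t. A $ t \<bullet> x - b $ t > 0)"
    then have "x \<in> feas A b" by (intro in_feas) (auto simp: not_less)
    then have xF: "x \<in> feas A b" .
    have "x \<in> (\<Inter>z\<in>feas A b. {x. \<epsilon> \<le> N (x - z)})" using that by (simp add: K_def)
    then have "x \<in> {x. \<epsilon> \<le> N (x - x)}" using xF by blast
    then have "\<epsilon> \<le> N (x - x)" by (simp only: mem_Collect_eq)
    then show False using e by simp
  qed
  have cf: "\<And>t. continuous_on K (\<lambda>x. A $ t \<bullet> x - b $ t)" by (intro continuous_intros)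
  obtain \<eta> where eta: "\<eta> > 0" and H0: "\<forall>x\<in>K. \<exists>t. A $ t \<bullet> x - b $ t > \<eta>"
    using compact_pos_ex[OF cK cf pos] by blast
  have H: "\<And>x. x \<in> K \<Longrightarrow> \<exists>t. A $ t \<bullet> x - b $ t > \<eta>" using H0 by blast
  obtain C where C: "C > 0" "\<And>x. N x \<le> C * norm x" by (rule upper) blast
  have R'0: "R' \<ge> 0" by (simp add: R'_def)
  have CR: "1 + C * R' > 0" using C R'0 by (simp add: add_pos_nonneg)
  define \<delta> where "\<delta> = min \<delta>1 (\<eta> / (1 + C * R'))"
  show ?thesis
  proof (rule that[of \<delta>])
    show "\<delta> > 0" using d1 eta CR by (simp add: \<delta>_def)
    fix A' b' x assume P: "param_norm N (A' - A) (b' - b) < \<delta>" and x: "x \<in> feas A' b'"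
    define P where "P = param_norm N (A' - A) (b' - b)"
    have Pd: "P < \<delta>" using P by (simp add: P_def)
    have P0: "P \<ge> 0" unfolding P_def by (rule pn_nonneg)
    have nx: "norm x \<le> R'" using RB[of A' b' x] P x by (simp add: \<delta>_def R'_def)
    have "C * norm x \<le> C * R'" using nx C(1) by (intro mult_left_mono) auto
    then have Nx: "N x \<le> C * R'" using C(2)[of x] by linarith
    have "A $ t \<bullet> x - b $ t \<le> \<eta>" for t
    proof -
      have "A $ t \<bullet> x - b $ t \<le> P * (1 + N x)" using residual[OF x] by (simp add: P_def)
      also have "\<dots> \<le> P * (1 + C * R')" using Nx P0 by (intro mult_left_mono) auto
      also have "\<dots> \<le> (\<eta> / (1 + C * R')) * (1 + C * R')"
        using Pd CR by (intro mult_right_mono) (auto simp: \<delta>_def)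
      also have "\<dots> = \<eta>" using CR by simp
      finally show ?thesis .
    qed
    then have "x \<notin> K"
    proof (intro notI)
      assume le: "\<And>t. A $ t \<bullet> x - b $ t \<le> \<eta>" and "x \<in> K"
      then obtain t where "A $ t \<bullet> x - b $ t > \<eta>" using H by blast
      with le[of t] show False by linarith
    qed
    moreover have "x \<in> cball 0 R'" using nx by simp
    ultimately have "x \<notin> (\<Inter>z\<in>feas A b. {x. \<epsilon> \<le> N (x - z)})" unfolding K_def by blast
    then obtain z where "z \<in> feas A b" "\<not> \<epsilon> \<le> N (x - z)" by blast
    then show "\<exists>z\<in>feas A b. N (x - z) < \<epsilon>" by (auto simp: not_le)
  qed
qed

lemma claimB:
  assumes ne: "feas A b \<noteq> {}" and bd: "bounded (feas A b)" and k0: "0 \<le> \<kappa>"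
    and all: "\<forall>xb\<in>feas A b. clmP N A b xb \<kappa>"
  shows "LipP N A b \<kappa>"
proof -
  define Q where "Q = (\<lambda>xb \<delta> \<epsilon>. \<forall>A' b'. param_norm N (A' - A) (b' - b) < \<delta> \<longrightarrow>
      (\<forall>x\<in>feas A' b'. N (x - xb) < \<epsilon> \<longrightarrow>
          distN N x (feas A b) \<le> ereal (\<kappa> * param_norm N (A' - A) (b' - b))))"
  have "\<forall>xb\<in>feas A b. \<exists>p. fst p > 0 \<and> snd p > 0 \<and> Q xb (fst p) (snd p)"
  proof
    fix xb assume "xb \<in> feas A b"
    then obtain \<delta> \<epsilon> where "\<delta> > 0" "\<epsilon> > 0" "Q xb \<delta> \<epsilon>" using all unfolding clmP_def Q_def by blast
    then show "\<exists>p. fst p > 0 \<and> snd p > 0 \<and> Q xb (fst p) (snd p)" by (intro exI[of _ "(\<delta>, \<epsilon>)"]) auto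
  qed
  then obtain p where p0: "\<forall>xb\<in>feas A b. fst (p xb) > 0 \<and> snd (p xb) > 0 \<and> Q xb (fst (p xb)) (snd (p xb))"
    by (rule bchoice[THEN exE]) blast
  have p: "\<And>xb. xb \<in> feas A b \<Longrightarrow> fst (p xb) > 0 \<and> snd (p xb) > 0 \<and> Q xb (fst (p xb)) (snd (p xb))"
    using p0 by blast
  define dl where "dl = (\<lambda>xb. fst (p xb))"
  define ep where "ep = (\<lambda>xb. snd (p xb))"
  have cF: "compact (feas A b)" using bd feas_closed by (simp add: compact_eq_bounded_closed)
  have opn: "open {x. N (x - xb) < ep xb / 2}" for xb
    by (rule open_Collect_less[OF Ncont_shift continuous_on_const])
  have cov: "feas A b \<subseteq> (\<Union>xb\<in>feas A b. {x. N (x - xb) < ep xb / 2})"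
  proof
    fix x assume x: "x \<in> feas A b"
    then have "ep x > 0" using p by (simp add: ep_def)
    then show "x \<in> (\<Union>xb\<in>feas A b. {x. N (x - xb) < ep xb / 2})" using x
      by (intro UN_I[of x]) auto
  qed
  obtain C' where C'F: "C' \<subseteq> feas A b" and fC: "finite C'"
    and covC: "feas A b \<subseteq> (\<Union>xb\<in>C'. {x. N (x - xb) < ep xb / 2})"
    using compactE_image[OF cF opn cov] by blast
  have C'ne: "C' \<noteq> {}" using covC ne by auto
  define \<epsilon>0 where "\<epsilon>0 = Min ((\<lambda>xb. ep xb / 2) ` C')"
  define \<delta>0 where "\<delta>0 = Min (dl ` C')"
  have e0: "\<epsilon>0 > 0" unfolding \<epsilon>0_def using fC C'ne C'F p by (subst Min_gr_iff) (auto simp: ep_def)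
  have d0: "\<delta>0 > 0" unfolding \<delta>0_def using fC C'ne C'F p by (subst Min_gr_iff) (auto simp: dl_def)
  obtain \<delta>1 where d1: "\<delta>1 > 0" and
    U: "\<And>A' b' x. param_norm N (A' - A) (b' - b) < \<delta>1 \<Longrightarrow> x \<in> feas A' b' \<Longrightarrow> \<exists>z\<in>feas A b. N (x - z) < \<epsilon>0"
    using usc[OF ne bd e0] by blast
  define \<delta> where "\<delta> = min \<delta>0 \<delta>1"
  have main: "distN N x (feas A b) \<le> ereal (\<kappa> * param_norm N (A' - A) (b' - b))"
    if P: "param_norm N (A' - A) (b' - b) < \<delta>" and x: "x \<in> feas A' b'" for A' b' x
  proof -
    obtain z where zF: "z \<in> feas A b" and xz: "N (x - z) < \<epsilon>0"
      using U[of A' b' x] P x by (auto simp: \<delta>_def)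
    obtain xb where xbC: "xb \<in> C'" and zxb: "N (z - xb) < ep xb / 2" using covC zF by blast
    have "\<epsilon>0 \<le> ep xb / 2" unfolding \<epsilon>0_def using fC xbC by (intro Min_le) auto
    then have "N (x - xb) < ep xb" using Ntri_diff[of x xb z] xz zxb by linarith
    moreover have "\<delta>0 \<le> dl xb" unfolding \<delta>0_def using fC xbC by (intro Min_le) auto
    then have "param_norm N (A' - A) (b' - b) < dl xb" using P by (simp add: \<delta>_def)
    moreover have "Q xb (dl xb) (ep xb)" using p[of xb] xbC C'F by (auto simp: dl_def ep_def)
    ultimately show ?thesis using x unfolding Q_def by blast
  qed
  show ?thesis unfolding LipP_def using k0 d0 d1 main by (intro conjI exI[of _ \<delta>]) (auto simp: \<delta>_def)
qed

lemma clmP_mono: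
  assumes "clmP N A b xb \<kappa>" "\<kappa> \<le> r" shows "clmP N A b xb r"
proof -
  obtain \<delta> \<epsilon> where k0: "0 \<le> \<kappa>" and d: "\<delta> > 0" and e: "\<epsilon> > 0" and
    K: "\<And>A' b' x. param_norm N (A' - A) (b' - b) < \<delta> \<Longrightarrow> x \<in> feas A' b' \<Longrightarrow> N (x - xb) < \<epsilon> \<Longrightarrow>
          distN N x (feas A b) \<le> ereal (\<kappa> * param_norm N (A' - A) (b' - b))"
    using assms(1) unfolding clmP_def by blast
  have "distN N x (feas A b) \<le> ereal (r * param_norm N (A' - A) (b' - b))"
    if "param_norm N (A' - A) (b' - b) < \<delta>" "x \<in> feas A' b'" "N (x - xb) < \<epsilon>" for A' b' x
  proof -
    have "distN N x (feas A b) \<le> ereal (\<kappa> * param_norm N (A' - A) (b' - b))" by (rule K[OF that])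
    also have "\<kappa> * param_norm N (A' - A) (b' - b) \<le> r * param_norm N (A' - A) (b' - b)"
      using assms(2) pn_nonneg by (rule mult_right_mono)
    finally show ?thesis by simp
  qed
  then show ?thesis unfolding clmP_def using k0 assms(2) d e by (intro conjI exI[of _ \<delta>] exI[of _ \<epsilon>]) auto
qed

end

theorem theorem5:
  fixes N :: "real^'n \<Rightarrow> real" and A :: "real^'n^'m::finite" and b :: "real^'m"
  assumes "is_norm N"
    and "feas A b \<noteq> {}"
    and "bounded (feas A b)"
  shows "Lipusc N A b = Max ((\<lambda>x. clm N A b x) ` extr_set A b)"
proof -
  interpret nrm N by (rule nrm.intro[OF assms(1)])
  note ne = assms(2) and bd = assms(3)
  define E where "E = extr_set A b"
  have E: "E = {v. v extreme_point_of (feas A b)}" unfolding E_def by (rule extr_set_eq[OF ne bd])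
  have fE: "finite E" unfolding E by (rule extr_finite)
  have cF: "compact (feas A b)" using bd feas_closed by (simp add: compact_eq_bounded_closed)
  obtain v0 where "v0 extreme_point_of (feas A b)"
    using extreme_point_exists_convex[OF cF feas_convex ne] by blast
  then have Ene: "E \<noteq> {}" unfolding E by blast
  have EF: "E \<subseteq> feas A b" unfolding E by (auto simp: extreme_point_of_def)
  define M where "M = Max ((\<lambda>x. clm N A b x) ` E)"
  have le1: "M \<le> Lipusc N A b"
    unfolding M_def
  proof (rule Max.boundedI)
    show "finite ((\<lambda>x. clm N A b x) ` E)" using fE by simp
    show "(\<lambda>x. clm N A b x) ` E \<noteq> {}" using Ene by simp
    fix a assume "a \<in> (\<lambda>x. clm N A b x) ` E"
    then obtain v where a: "a = clm N A b v" by blast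
    have "{ereal \<kappa> |\<kappa>. LipP N A b \<kappa>} \<subseteq> {ereal \<kappa> |\<kappa>. clmP N A b v \<kappa>}"
    proof
      fix y assume "y \<in> {ereal \<kappa> |\<kappa>. LipP N A b \<kappa>}"
      then obtain \<kappa> where y: "y = ereal \<kappa>" and "LipP N A b \<kappa>" by blast
      then obtain \<delta> where k0: "0 \<le> \<kappa>" and d: "\<delta> > 0" and
        LL: "\<forall>A' b'. param_norm N (A' - A) (b' - b) < \<delta> \<longrightarrow>
          (\<forall>x\<in>feas A' b'. distN N x (feas A b) \<le> ereal (\<kappa> * param_norm N (A' - A) (b' - b)))"
        unfolding LipP_def by blast
      have "clmP N A b v \<kappa>" unfolding clmP_def
        using k0 d LL by (intro conjI exI[of _ \<delta>] exI[of _ "1::real"]) auto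
      then show "y \<in> {ereal \<kappa> |\<kappa>. clmP N A b v \<kappa>}" using y by blast
    qed
    then show "a \<le> Lipusc N A b" unfolding a clm_eq Lipusc_eq by (rule Inf_superset_mono)
  qed
  have le2: "Lipusc N A b \<le> M"
  proof (rule dense_ge)
    fix y assume My: "M < y"
    show "Lipusc N A b \<le> y"
    proof (cases y)
      case PInf
      then show ?thesis by simp
    next
      case MInf
      then show ?thesis using My by simp
    next
      case (real r)
      have allc: "clmP N A b xb r" if xb: "xb \<in> feas A b" for xb
      proof -
        obtain v where vE: "v extreme_point_of (feas A b)" and Nle: "N xb \<le> N v"
          and act: "\<And>t. A $ t \<bullet> xb = b $ t \<Longrightarrow> A $ t \<bullet> v = b $ t"
          using face_vertex[OF ne bd xb] by blast
        have vE': "v \<in> E" using vE unfolding E by simp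
        have vF: "v \<in> feas A b" using vE' EF by blast
        have "clm N A b xb \<le> clm N A b v" by (rule clm_le[OF xb vF act Nle])
        also have "clm N A b v \<le> M" unfolding M_def using fE vE' by (intro Max_ge) auto
        also have "M < ereal r" using My real by simp
        finally have "Inf {ereal \<kappa> |\<kappa>. clmP N A b xb \<kappa>} < ereal r" unfolding clm_eq .
        then obtain \<kappa> where k: "clmP N A b xb \<kappa>" and kr: "ereal \<kappa> < ereal r"
          unfolding Inf_less_iff by blast
        show ?thesis using clmP_mono[OF k] kr by simp
      qed
      obtain x0 where "x0 \<in> feas A b" using ne by blast
      then have "0 \<le> r" using allc unfolding clmP_def by blast
      then have "LipP N A b r" using claimB[OF ne bd] allc by blast
      then have "Lipusc N A b \<le> ereal r" unfolding Lipusc_eq by (intro Inf_lower) blast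
      then show ?thesis using real by simp
    qed
  qed
  show ?thesis using le1 le2 by (simp add: M_def E_def)
qed

end
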